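(* Let $N \ge 1$ and let $W_N$ be the set of binary words of length $N$. Define $\varphi_2 : W_N \to W_N$ by $\varphi_2(u) = 1^{p+1} v 11 v'$ if $u = 1^p v 111 v'$ where $p \geq 0$, $v'$ is a (possibly empty) word, and $v$ is a nonempty word whose first and last letters are $0$ and which does not contain $111$ as a contiguous subword; and $\varphi_2(u) = u$ otherwise. Then $|P(\varphi_2(u))| = |P(u)|$ for every $u \in W_N$.
   Context: For a binary word $x$, $x^j$ denotes $j$ concatenated copies of $x$, and juxtaposition denotes concatenation. For a binary word $w = w_1 \cdots w_\ell$ of length $\ell$, $P(w)$ is the set of indices $i \geq 2$ such that at least one of the following holds: (i) $\ell \geq i$ and $w_{i-1} w_i = 00$; (ii) $\ell \geq i+2$ and $w_{i-1} w_i w_{i+1} w_{i+2} = 0100$; (iii) $\ell \geq i+3$ and $w_{i-1} \cdots w_{i+3} = 01010$. *)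

theory Defs
  imports Main
begin

(* Binary words are lists of naturals with letters in {0,1}; positions are 1-based
   in the paper, so w_i is  w ! (i - 1). *)

definition W :: "nat \<Rightarrow> nat list set" where
  "W N = {w. length w = N \<and> set w \<subseteq> {0, 1}}"

definition P :: "nat list \<Rightarrow> nat set" where
  "P w = {i. 2 \<le> i \<and>
     ((length w \<ge> i \<and> w ! (i - 2) = 0 \<and> w ! (i - 1) = 0)
    \<or> (length w \<ge> i + 2 \<and> w ! (i - 2) = 0 \<and> w ! (i - 1) = 1 \<and> w ! i = 0 \<and> w ! (i + 1) = 0)
    \<or> (length w \<ge> i + 3 \<and> w ! (i - 2) = 0 \<and> w ! (i - 1) = 1 \<and> w ! i = 0
        \<and> w ! (i + 1) = 1 \<and> w ! (i + 2) = 0))}"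

definition contains_factor :: "nat list \<Rightarrow> nat list \<Rightarrow> bool" where
  "contains_factor x v \<longleftrightarrow> (\<exists>a b. v = a @ x @ b)"

definition good_v :: "nat list \<Rightarrow> bool" where
  "good_v v \<longleftrightarrow> v \<noteq> [] \<and> hd v = 0 \<and> last v = 0 \<and> \<not> contains_factor [1,1,1] v"

definition phi2_dec :: "nat list \<Rightarrow> nat \<Rightarrow> nat list \<Rightarrow> nat list \<Rightarrow> bool" where
  "phi2_dec u p v v' \<longleftrightarrow> u = replicate p 1 @ v @ [1,1,1] @ v' \<and> good_v v"

definition phi2 :: "nat list \<Rightarrow> nat list" where
  "phi2 u = (if \<exists>p v v'. phi2_dec u p v v'
             then (THE w. \<exists>p v v'. phi2_dec u p v v' \<and> w = replicate (p + 1) 1 @ v @ [1,1] @ v')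
             else u)"

end

theory Submission
  imports Defs
begin

definition starts :: "nat list \<Rightarrow> bool" where
  "starts s \<longleftrightarrow> (length s \<ge> 2 \<and> s!0 = 0 \<and> s!1 = 0)
    \<or> (length s \<ge> 4 \<and> s!0 = 0 \<and> s!1 = 1 \<and> s!2 = 0 \<and> s!3 = 0)
    \<or> (length s \<ge> 5 \<and> s!0 = 0 \<and> s!1 = 1 \<and> s!2 = 0 \<and> s!3 = 1 \<and> s!4 = 0)"

fun cnt :: "nat list \<Rightarrow> nat" where
  "cnt [] = 0"
| "cnt (x # w) = (if starts (x # w) then 1 else 0) + cnt w"

definition S :: "nat list \<Rightarrow> nat set" where
  "S w = {j. j < length w \<and> starts (drop j w)}"

lemma S_Cons: "S (x # w) = (if starts (x # w) then insert 0 (Suc ` S w) else Suc ` S w)"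
proof -
  have "S (x # w) = (if starts (x # w) then {0} else {}) \<union> Suc ` S w"
  proof (rule set_eqI)
    fix j show "j \<in> S (x # w) \<longleftrightarrow> j \<in> (if starts (x # w) then {0} else {}) \<union> Suc ` S w"
      by (cases j) (auto simp: S_def)
  qed
  then show ?thesis by auto
qed

lemma card_S: "card (S w) = cnt w"
proof (induction w)
  case Nil then show ?case by (simp add: S_def)
next
  case (Cons x w)
  have fin: "finite (S w)" by (simp add: S_def)
  show ?case using Cons fin by (simp add: S_Cons card_image)
qed

lemma P_S: "P w = (\<lambda>j. j + 2) ` S w"
proof (rule set_eqI)
  fix i
  show "i \<in> P w \<longleftrightarrow> i \<in> (\<lambda>j. j + 2) ` S w"
  proof
    assume h: "i \<in> P w"
    then have "2 \<le> i" by (simp add: P_def)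
    then obtain j where ij: "i = j + 2" by (metis add.commute le_Suc_ex)
    have "j \<in> S w" using h unfolding ij P_def S_def starts_def
      by (auto simp: nth_drop eval_nat_numeral)
    then show "i \<in> (\<lambda>j. j + 2) ` S w" using ij by blast
  next
    assume "i \<in> (\<lambda>j. j + 2) ` S w"
    then obtain j where "j \<in> S w" "i = j + 2" by blast
    then show "i \<in> P w" unfolding P_def S_def starts_def
      by (auto simp: nth_drop add.commute eval_nat_numeral)
  qed
qed

lemma card_P: "card (P w) = cnt w"
  proof -
  have "inj_on (\<lambda>j::nat. j + 2) (S w)" by (simp add: inj_on_def)
  then show ?thesis unfolding P_S by (simp only: card_image card_S)
qed

lemma starts_11: "starts (s @ 1 # 1 # r) = starts (s @ [1,1])"
  apply (cases s rule: list.exhaust, simp add: starts_def)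
  subgoal for a s1 apply (cases s1, simp add: starts_def)
    subgoal for b s2 apply (cases s2, simp add: starts_def)
      subgoal for c s3 apply (cases s3, simp add: starts_def)
        subgoal for d s4 by (cases s4; simp add: starts_def)
        done
      done
    done
  done

lemma cnt_11: "cnt (xs @ 1 # 1 # r) = cnt (xs @ [1,1]) + cnt r"
proof (induction xs)
  case Nil then show ?case by (simp add: starts_def)
next
  case (Cons x xs)
  then show ?case using starts_11[of "x # xs" r] by simp
qed

lemma rep_eq: "replicate p 1 @ (0 # a) = replicate q 1 @ ((0::nat) # b) \<Longrightarrow> p = q \<and> a = b"
proof (induction p arbitrary: q)
  case 0 then show ?case by (cases q) auto
next
  case (Suc p) then show ?case by (cases q) auto
qed

lemma v_eq_aux:
  assumes "v = w @ us" "us @ [1,1,1] @ x = [1,1,1] @ y" "good_v v"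
  shows "us = []"
proof (cases us rule: list.exhaust)
  case (Cons a us1)
  show ?thesis
  proof (cases us1)
    case Nil then show ?thesis using assms Cons by (simp add: good_v_def)
  next
    case (Cons b us2)
    show ?thesis
    proof (cases us2)
      case Nil then show ?thesis using assms Cons \<open>us = a # us1\<close> by (simp add: good_v_def)
    next
      case (Cons c r)
      have "v = w @ [1,1,1] @ r" using assms Cons \<open>us1 = b # us2\<close> \<open>us = a # us1\<close> by simp
      then have "contains_factor [1,1,1] v" unfolding contains_factor_def by blast
      then show ?thesis using assms by (simp add: good_v_def)
    qed
  qed
qed simp

lemma dec_unique:
  assumes "phi2_dec u p v v'" "phi2_dec u q w w'"
  shows "p = q \<and> v = w \<and> v' = w'"
proof -
  have gv: "good_v v" and gw: "good_v w" using assms by (auto simp: phi2_dec_def)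
  obtain a where a: "v = 0 # a" using gv unfolding good_v_def by (cases v) auto
  obtain b where b: "w = 0 # b" using gw unfolding good_v_def by (cases w) auto
  have "replicate p 1 @ (0 # (a @ [1,1,1] @ v')) = replicate q 1 @ (0 # (b @ [1,1,1] @ w'))"
    using assms a b by (simp add: phi2_dec_def)
  from rep_eq[OF this] have pq: "p = q" and e: "a @ [1,1,1] @ v' = b @ [1,1,1] @ w'" by auto
  have e2: "v @ [1,1,1] @ v' = w @ [1,1,1] @ w'" using e a b by simp
  have vw: "v = w"
  proof -
    from e2 obtain us where
      "(v = w @ us \<and> us @ [1,1,1] @ v' = [1,1,1] @ w') \<or> (v @ us = w \<and> [1,1,1] @ v' = us @ [1,1,1] @ w')"
      unfolding append_eq_append_conv2 by blast
    then show ?thesis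
    proof
      assume h: "v = w @ us \<and> us @ [1,1,1] @ v' = [1,1,1] @ w'"
      then have "us = []" using v_eq_aux[of v w us v' w'] gv by blast
      then show ?thesis using h by simp
    next
      assume h: "v @ us = w \<and> [1,1,1] @ v' = us @ [1,1,1] @ w'"
      then have "us = []" using v_eq_aux[of w v us w' v'] gw by metis
      then show ?thesis using h by simp
    qed
  qed
  show ?thesis using pq vw e2 by simp
qed

theorem lemma4p2:
  fixes N :: nat and u :: "nat list"
  assumes "N \<ge> 1" and "u \<in> W N"
  shows "card (P (phi2 u)) = card (P u)"
proof (cases "\<exists>p v v'. phi2_dec u p v v'")
  case False then show ?thesis by (simp add: phi2_def)
next
  case True
  then obtain p v v' where d: "phi2_dec u p v v'" by blast
  let ?w = "replicate (p + 1) 1 @ v @ [1,1] @ v'"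
  have th: "(THE w. \<exists>p v v'. phi2_dec u p v v' \<and> w = replicate (p + 1) 1 @ v @ [1,1] @ v') = ?w"
    apply (rule the_equality)
    using d apply blast
    using d dec_unique by blast
  have "phi2 u = ?w" using True th by (simp add: phi2_def)
  moreover have "cnt ?w = cnt u"
  proof -
    have u: "u = (replicate p 1 @ v) @ 1 # 1 # (1 # v')" using d by (simp add: phi2_dec_def)
    have w: "?w = (1 # replicate p 1 @ v) @ 1 # 1 # v'" by simp
    have "cnt ?w = cnt ((1 # replicate p 1 @ v) @ [1,1]) + cnt v'" by (subst w, rule cnt_11)
    also have "\<dots> = cnt ((replicate p 1 @ v) @ [1,1]) + cnt (1 # v')" by (simp add: starts_def)
    also have "\<dots> = cnt u" by (subst u, rule cnt_11[symmetric])
    finally show ?thesis .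
  qed
  ultimately show ?thesis by (simp add: card_P)
qed

end
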